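(* Let $h>0$ and $0<\alpha<\pi/8$, and place the target at $g=(0,0)$. Put $t=\dfrac{2h}{\tan(\pi/4-\alpha)}$, $s_p=(-t/2,h)$, $s_q=(t/2,h)$, and $$L=\frac{2h\sin(2\alpha)}{1-\sin(2\alpha)}.$$ Let $D$ be the vertical segment from $(0,0)$ to $(0,-L)$. Then for every camera location $s\in S$ there is a unit vector $u$ such that the wedge $W(s,u)$ contains both $g$ and the whole segment $D$. (Here $L$ equals the length of the vertical diagonal of the intersection of the wedges $W_p\in\mathcal W(g,s_p)$, $W_q\in\mathcal W(g,s_q)$ whose upper boundary rays both pass through $g$.)
   Context: Work in $\mathbb{R}^2$ with coordinates $(x,z)$. The ground line is $G=\{z=0\}$ and the viewing line is $S=\{z=h\}$, $h>0$. Fix $\alpha>0$. For a point $s$ and a unit vector $u$, the wedge $W(s,u)=\{s+rv:\ r\ge 0,\ |v|=1,\ \angle(v,u)\le\alpha\}$ (apex $s$, opening angle $2\alpha$). For a target $g$ and camera location $s$, $\mathcal W(g,s)$ denotes the set of all wedges $W(s,u)$ containing $g$. *)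

theory Defs
  imports "HOL-Analysis.Analysis"
begin

definition vec_angle :: "real \<times> real \<Rightarrow> real \<times> real \<Rightarrow> real" where
  "vec_angle v u = arccos ((v \<bullet> u) / (norm v * norm u))"

definition wedge :: "real \<Rightarrow> real \<times> real \<Rightarrow> real \<times> real \<Rightarrow> (real \<times> real) set" where
  "wedge \<alpha> s u = {s + r *\<^sub>R v | r v. r \<ge> 0 \<and> norm v = 1 \<and> vec_angle v u \<le> \<alpha>}"

end

theory Submission
  imports Defs
begin

lemma wedge_mem:
  fixes u w s :: "real \<times> real"
  assumes "norm u = 1" "0 \<le> \<alpha>" "\<alpha> \<le> pi" "w \<noteq> 0" "inner w u \<ge> norm w * cos \<alpha>"
  shows "s + w \<in> wedge \<alpha> s u"
proof -
  define v where "v = (1 / norm w) *\<^sub>R w"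
  have nw: "norm w > 0" using assms(4) by simp
  have nv: "norm v = 1" using nw by (simp add: v_def)
  have sw: "s + w = s + norm w *\<^sub>R v" using nw by (simp add: v_def)
  have iv: "inner v u = inner w u / norm w" by (simp add: v_def)
  have "cos \<alpha> \<le> inner w u / norm w" using assms(5) nw by (simp add: pos_le_divide_eq mult.commute)
  hence c1: "cos \<alpha> \<le> inner v u" using iv by simp
  have c2: "inner v u \<le> 1" using norm_cauchy_schwarz[of v u] nv assms(1) by simp
  have "vec_angle v u = arccos (inner v u)" using nv assms(1) by (simp add: vec_angle_def)
  also have "\<dots> \<le> arccos (cos \<alpha>)" by (rule arccos_le_arccos) (use c1 c2 in auto)
  also have "\<dots> = \<alpha>" using assms by (simp add: arccos_cos)
  finally have "vec_angle v u \<le> \<alpha>" .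
  then have "\<exists>r v'. s + w = s + r *\<^sub>R v' \<and> r \<ge> 0 \<and> norm v' = 1 \<and> vec_angle v' u \<le> \<alpha>"
    using sw nv nw by (intro exI[of _ "norm w"] exI[of _ v]) auto
  then show ?thesis unfolding wedge_def by blast
qed

lemma cone_comb:
  fixes a b u :: "real \<times> real"
  assumes "inner a u \<ge> norm a * k" "inner b u \<ge> norm b * k" "k \<ge> 0" "0 \<le> t" "t \<le> 1"
  shows "inner ((1 - t) *\<^sub>R a + t *\<^sub>R b) u \<ge> norm ((1 - t) *\<^sub>R a + t *\<^sub>R b) * k"
proof -
  have "norm ((1 - t) *\<^sub>R a + t *\<^sub>R b) \<le> (1 - t) * norm a + t * norm b"
    using norm_triangle_ineq[of "(1 - t) *\<^sub>R a" "t *\<^sub>R b"] assms(4,5) by simp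
  hence "norm ((1 - t) *\<^sub>R a + t *\<^sub>R b) * k \<le> ((1 - t) * norm a + t * norm b) * k"
    using assms(3) by (rule mult_right_mono)
  also have "\<dots> = (1 - t) * (norm a * k) + t * (norm b * k)" by (simp add: algebra_simps)
  also have "\<dots> \<le> (1 - t) * inner a u + t * inner b u"
    using assms by (intro add_mono mult_left_mono) auto
  also have "\<dots> = inner ((1 - t) *\<^sub>R a + t *\<^sub>R b) u" by (simp add: inner_add_left)
  finally show ?thesis .
qed

lemma bisector:
  fixes a b :: "real \<times> real"
  assumes "a \<noteq> 0" "b \<noteq> 0" "0 \<le> \<alpha>" "2 * \<alpha> < pi / 2"
    and ab: "inner a b \<ge> norm a * norm b * cos (2 * \<alpha>)"
  shows "\<exists>u. norm u = 1 \<and> inner a u \<ge> norm a * cos \<alpha> \<and> inner b u \<ge> norm b * cos \<alpha>"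
proof -
  define e1 where "e1 = (1 / norm a) *\<^sub>R a"
  define e2 where "e2 = (1 / norm b) *\<^sub>R b"
  define c where "c = inner e1 e2"
  have na: "norm a > 0" "norm b > 0" using assms by auto
  have cdef: "c = inner a b / (norm a * norm b)" by (simp add: c_def e1_def e2_def)
  have cos2: "cos (2 * \<alpha>) > 0" using assms by (intro cos_gt_zero_pi) auto
  have cge: "c \<ge> cos (2 * \<alpha>)" using ab na by (simp add: cdef field_simps)
  have e11: "inner e1 e1 = 1" using na by (simp add: e1_def inner_commute power2_norm_eq_inner[symmetric])
  have e22: "inner e2 e2 = 1" using na by (simp add: e2_def inner_commute power2_norm_eq_inner[symmetric])
  define n where "n = norm (e1 + e2)"
  have n2: "n^2 = 2 + 2 * c"
    by (simp add: n_def power2_norm_eq_inner inner_add_left inner_add_right e11 e22 c_def inner_commute)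
  have "n^2 > 0" using n2 cge cos2 by simp
  hence npos: "n > 0" using n_def by (metis norm_ge_zero power_zero_numeral less_eq_real_def less_irrefl)
  define u where "u = (1 / n) *\<^sub>R (e1 + e2)"
  have nu: "norm u = 1" using npos by (simp add: u_def n_def)
  have i1: "inner e1 u = (1 + c) / n"
    by (simp add: u_def inner_add_right e11 c_def)
  have i2: "inner e2 u = (1 + c) / n"
    by (simp add: u_def inner_add_right e22 c_def inner_commute)
  have ca: "cos \<alpha> \<le> (1 + c) / n"
  proof -
    have "(cos \<alpha>)^2 = (1 + cos (2 * \<alpha>)) / 2" by (simp add: cos_double_cos)
    also have "\<dots> \<le> (1 + c) / 2" using cge by simp
    also have "\<dots> = ((1 + c) / n)^2" using n2 npos cos2 cge
      by (simp add: power_divide power2_eq_square field_simps)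
    finally have "(cos \<alpha>)^2 \<le> ((1 + c) / n)^2" .
    moreover have "(1 + c) / n \<ge> 0" using npos cge cos2 by simp
    ultimately show ?thesis by (rule power2_le_imp_le)
  qed
  have "a = norm a *\<^sub>R e1" using na by (simp add: e1_def)
  hence ia: "inner a u = norm a * inner e1 u" by (metis inner_scaleR_left)
  have "b = norm b *\<^sub>R e2" using na by (simp add: e2_def)
  hence ib: "inner b u = norm b * inner e2 u" by (metis inner_scaleR_left)
  show ?thesis
  proof (intro exI[of _ u] conjI)
    show "norm u = 1" by fact
    show "inner a u \<ge> norm a * cos \<alpha>" unfolding ia i1 using ca na by (intro mult_left_mono) auto
    show "inner b u \<ge> norm b * cos \<alpha>" unfolding ib i2 using ca na by (intro mult_left_mono) auto
  qed
qed

theorem lemma1: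
  fixes h \<alpha> :: real
  assumes "h > 0" and "0 < \<alpha>" and "\<alpha> < pi / 8"
  defines "L \<equiv> 2 * h * sin (2 * \<alpha>) / (1 - sin (2 * \<alpha>))"
  shows "\<forall>s :: real \<times> real. snd s = h \<longrightarrow>
           (\<exists>u :: real \<times> real. norm u = 1 \<and> (0, 0) \<in> wedge \<alpha> s u \<and>
              closed_segment (0, 0) (0, - L) \<subseteq> wedge \<alpha> s u)"
proof (intro allI impI)
  fix s :: "real \<times> real"
  assume sh: "snd s = h"
  define x where "x = fst s"
  have s: "s = (x, h)" using sh by (simp add: x_def prod_eq_iff)
  define \<sigma> where "\<sigma> = sin (2 * \<alpha>)"
  have \<sigma>pos: "\<sigma> > 0" unfolding \<sigma>_def using assms by (intro sin_gt_zero) auto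
  have \<sigma>1: "\<sigma> < 1"
  proof -
    have "\<sigma> < sin (pi/2)" unfolding \<sigma>_def using assms by (intro sin_monotone_2pi) auto
    thus ?thesis by simp
  qed
  have Ldef: "L * (1 - \<sigma>) = 2 * h * \<sigma>" using \<sigma>1 by (simp add: L_def \<sigma>_def)
  have Lpos: "L > 0" using \<sigma>1 \<sigma>pos assms(1) by (simp add: L_def \<sigma>_def)
  have cos2: "cos (2 * \<alpha>) > 0" using assms by (intro cos_gt_zero_pi) auto
  have cs: "(cos (2 * \<alpha>))^2 = 1 - \<sigma>^2" by (simp add: \<sigma>_def cos_squared_eq)
  define a :: "real \<times> real" where "a = (- x, - h)"
  define b :: "real \<times> real" where "b = (- x, - (h + L))"
  have a0: "a \<noteq> 0" using assms(1) by (simp add: a_def zero_prod_def)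
  have b0: "b \<noteq> 0" using assms(1) Lpos by (simp add: b_def zero_prod_def)
  have ab: "inner a b = x^2 + h * (h + L)" by (simp add: a_def b_def power2_eq_square algebra_simps)
  have na2: "(norm a)^2 = x^2 + h^2" by (simp add: a_def norm_Pair)
  have nb2: "(norm b)^2 = x^2 + (h + L)^2" by (simp add: b_def norm_Pair power2_eq_square) (simp add: algebra_simps)
  have nab: "(norm a * norm b)^2 = (x^2 + h^2) * (x^2 + (h + L)^2)"
    by (simp only: power_mult_distrib na2 nb2)
  have key: "inner a b \<ge> norm a * norm b * cos (2 * \<alpha>)"
  proof -
    define K where "K = h * (h + L)"
    have KL: "L^2 * (1 - \<sigma>^2) = 4 * K * \<sigma>^2"
    proof -
      have "K * (1 - \<sigma>) = h * h * (1 - \<sigma>) + h * (L * (1 - \<sigma>))" by (simp add: K_def algebra_simps)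
      also have "\<dots> = h * h * (1 + \<sigma>)" by (simp only: Ldef) (simp add: algebra_simps)
      finally have e2: "K * (1 - \<sigma>) = h * h * (1 + \<sigma>)" .
      have "L^2 * (1 - \<sigma>^2) * (1 - \<sigma>) = 4 * K * \<sigma>^2 * (1 - \<sigma>)"
      proof -
        have "L^2 * (1 - \<sigma>^2) * (1 - \<sigma>) = (L * (1 - \<sigma>))^2 * (1 + \<sigma>)"
          by (simp add: power2_eq_square algebra_simps)
        also have "\<dots> = 4 * \<sigma>^2 * (h * h * (1 + \<sigma>))" by (simp only: Ldef) (simp add: power2_eq_square algebra_simps)
        also have "\<dots> = 4 * \<sigma>^2 * (K * (1 - \<sigma>))" by (simp only: e2)
        also have "\<dots> = 4 * K * \<sigma>^2 * (1 - \<sigma>)" by (simp add: algebra_simps)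
        finally show ?thesis .
      qed
      thus ?thesis using \<sigma>1 by simp
    qed
    have "(norm a * norm b * cos (2 * \<alpha>))^2 = (x^2 + h^2) * (x^2 + (h + L)^2) * (1 - \<sigma>^2)"
      using nab cs by (simp add: power_mult_distrib)
    also have "(x^2 + h^2) * (x^2 + (h + L)^2) = (x^2 + K)^2 + x^2 * L^2"
      by (simp add: K_def power2_eq_square algebra_simps)
    also have "((x^2 + K)^2 + x^2 * L^2) * (1 - \<sigma>^2) = (x^2 + K)^2 * (1 - \<sigma>^2) + x^2 * (4 * K * \<sigma>^2)"
      by (simp only: distrib_right mult.assoc KL)
    also have "\<dots> \<le> (x^2 + K)^2"
    proof -
      have "(x^2 - K)^2 * \<sigma>^2 \<ge> 0" by simp
      thus ?thesis by (simp add: power2_eq_square algebra_simps)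
    qed
    also have "\<dots> = (inner a b)^2" by (simp add: ab K_def)
    finally have "(norm a * norm b * cos (2 * \<alpha>))^2 \<le> (inner a b)^2" .
    moreover have "inner a b \<ge> 0" using ab assms(1) Lpos by simp
    ultimately show ?thesis by (rule power2_le_imp_le)
  qed
  obtain u where u: "norm u = 1" "inner a u \<ge> norm a * cos \<alpha>" "inner b u \<ge> norm b * cos \<alpha>"
    using bisector[OF a0 b0 _ _ key] assms by auto
  have ca: "cos \<alpha> \<ge> 0" using assms by (intro cos_ge_zero) auto
  have apr: "0 \<le> \<alpha>" "\<alpha> \<le> pi" using assms by auto
  show "\<exists>u :: real \<times> real. norm u = 1 \<and> (0, 0) \<in> wedge \<alpha> s u \<and>
              closed_segment (0, 0) (0, - L) \<subseteq> wedge \<alpha> s u"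
  proof (intro exI[of _ u] conjI subsetI)
    show "norm u = 1" by fact
    have "(0, 0) = s + a" by (simp add: s a_def)
    thus "(0, 0) \<in> wedge \<alpha> s u" using wedge_mem[OF u(1) apr a0 u(2)] by simp
  next
    fix p :: "real \<times> real" assume "p \<in> closed_segment (0, 0) (0, - L)"
    then obtain t where t: "0 \<le> t" "t \<le> 1" "p = (1 - t) *\<^sub>R (0, 0) + t *\<^sub>R (0, - L)"
      by (auto simp: in_segment)
    define w where "w = (1 - t) *\<^sub>R a + t *\<^sub>R b"
    have pw: "p = s + w" using t by (simp add: s w_def a_def b_def algebra_simps)
    have w0: "w \<noteq> 0"
    proof
      assume "w = 0"
      hence "snd w = 0" by simp
      moreover have "snd w = - h - t * L" by (simp add: w_def a_def b_def algebra_simps)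
      ultimately show False using assms(1) Lpos t by (smt (verit) mult_nonneg_nonneg)
    qed
    have "inner w u \<ge> norm w * cos \<alpha>"
      unfolding w_def by (rule cone_comb[OF u(2) u(3) ca t(1) t(2)])
    thus "p \<in> wedge \<alpha> s u" using wedge_mem[OF u(1) apr w0] pw by simp
  qed
qed

end
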